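(* Let $A\in\mathbb{R}^{m\times n}$ with columns $A_1,\dots,A_n$, let $y\in\mathbb{R}^m$, $\gamma>0$ and $\mu\ge 0$. Let $x^*$ be an optimal solution of (CR) with optimal value $\zeta_{CR}$, set $\varepsilon^*=y-Ax^*$ and $\delta_i=(A_i'\varepsilon^* )^2$ for $i=1,\dots,n$, and let $\bar\zeta$ be any number with $\bar\zeta\ge\zeta_R$. Then every optimal solution $(x,z)$ of (MIPR) satisfies, for each $i$: $z_i=0$ if $\zeta_{CR}+\mu-\gamma\delta_i>\bar\zeta$, and $z_i=1$ if $\zeta_{CR}-\mu+\gamma\delta_i>\bar\zeta$.
   Context: For $x_i\in\mathbb{R}$, $z_i\ge 0$ the perspective term $x_i^2/z_i$ is defined with the convention $x_i^2/z_i=0$ if $x_i=z_i=0$ and $x_i^2/z_i=+\infty$ if $z_i=0$, $x_i\neq 0$. (MIPR) is the problem $\zeta_R=\min_{x,z}\ \|y-Ax\|_2^2+\frac1\gamma\sum_{i=1}^n \frac{x_i^2}{z_i}+\mu\sum_{i=1}^n z_i$ subject to $x_i(1-z_i)=0$ for $i=1,\dots,n$, $x\in\mathbb{R}^n$, $z\in\{0,1\}^n$ (a mixed-integer formulation of $\min_x \|y-Ax\|_2^2+\frac1\gamma\|x\|_2^2+\mu\|x\|_0$). (CR) is its convex (perspective) relaxation: $\zeta_{CR}=\min_{x,z}\ \|y-Ax\|_2^2+\frac1\gamma\sum_{i=1}^n \frac{x_i^2}{z_i}+\mu\sum_{i=1}^n z_i$ subject to $x\in\mathbb{R}^n$, $z\in[0,1]^n$;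 an optimal solution $x^*$ means the $x$-part of an optimal pair $(x^*,z^* )$. $A_i'$ denotes the transpose of the $i$-th column of $A$. *)

theory Defs
  imports "HOL-Analysis.Analysis" "HOL-Library.Extended_Real"
begin

text \<open>Vectors in R^n are functions nat => real with components indexed 0..<n;
  the m x n matrix A is a function nat => nat => real, entry (row j, column i) = A j i.\<close>

definition resid :: "nat \<Rightarrow> nat \<Rightarrow> (nat \<Rightarrow> nat \<Rightarrow> real) \<Rightarrow> (nat \<Rightarrow> real) \<Rightarrow> (nat \<Rightarrow> real) \<Rightarrow> nat \<Rightarrow> real" where
  "resid m n A y x = (\<lambda>j. y j - (\<Sum>i<n. A j i * x i))"

definition persp :: "real \<Rightarrow> real \<Rightarrow> ereal" where
  "persp xi zi = (if zi = 0 then (if xi = 0 then 0 else \<infinity>) else ereal (xi\<^sup>2 / zi))"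

definition obj :: "nat \<Rightarrow> nat \<Rightarrow> (nat \<Rightarrow> nat \<Rightarrow> real) \<Rightarrow> (nat \<Rightarrow> real) \<Rightarrow> real \<Rightarrow> real
                   \<Rightarrow> (nat \<Rightarrow> real) \<Rightarrow> (nat \<Rightarrow> real) \<Rightarrow> ereal" where
  "obj m n A y \<gamma> \<mu> x z =
     ereal (\<Sum>j<m. (resid m n A y x j)\<^sup>2)
     + ereal (1 / \<gamma>) * (\<Sum>i<n. persp (x i) (z i))
     + ereal (\<mu> * (\<Sum>i<n. z i))"

definition mipr_feas :: "nat \<Rightarrow> (nat \<Rightarrow> real) \<Rightarrow> (nat \<Rightarrow> real) \<Rightarrow> bool" where
  "mipr_feas n x z \<longleftrightarrow> (\<forall>i<n. (z i = 0 \<or> z i = 1) \<and> x i * (1 - z i) = 0)"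

definition cr_feas :: "nat \<Rightarrow> (nat \<Rightarrow> real) \<Rightarrow> (nat \<Rightarrow> real) \<Rightarrow> bool" where
  "cr_feas n x z \<longleftrightarrow> (\<forall>i<n. 0 \<le> z i \<and> z i \<le> 1)"

definition zeta_R :: "nat \<Rightarrow> nat \<Rightarrow> (nat \<Rightarrow> nat \<Rightarrow> real) \<Rightarrow> (nat \<Rightarrow> real) \<Rightarrow> real \<Rightarrow> real \<Rightarrow> ereal" where
  "zeta_R m n A y \<gamma> \<mu> = (INF p \<in> {(x, z). mipr_feas n x z}. obj m n A y \<gamma> \<mu> (fst p) (snd p))"

definition mipr_opt where
  "mipr_opt m n A y \<gamma> \<mu> x z \<longleftrightarrow> mipr_feas n x z \<and>
     (\<forall>x' z'. mipr_feas n x' z' \<longrightarrow> obj m n A y \<gamma> \<mu> x z \<le> obj m n A y \<gamma> \<mu> x' z')"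

definition cr_opt where
  "cr_opt m n A y \<gamma> \<mu> x z \<longleftrightarrow> cr_feas n x z \<and>
     (\<forall>x' z'. cr_feas n x' z' \<longrightarrow> obj m n A y \<gamma> \<mu> x z \<le> obj m n A y \<gamma> \<mu> x' z')"

end

theory Submission imports Defs begin

definition P :: "real \<Rightarrow> real \<Rightarrow> real" where
  "P u w = (if w = 0 then 0 else u\<^sup>2 / w)"

lemma P_nonneg: "0 \<le> w \<Longrightarrow> 0 \<le> P u w"
  by (simp add: P_def)

lemma P_sub: assumes "0 \<le> c" "0 \<le> d" "c = 0 \<Longrightarrow> a = 0" "d = 0 \<Longrightarrow> b = 0"
  shows "P (a + b) (c + d) \<le> P a c + P b d"
proof (cases "c = 0 \<or> d = 0")
  case True
  then show ?thesis using assms by (auto simp: P_def)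
next
  case False
  then have c: "c > 0" and d: "d > 0" using assms by auto
  have "(a+b)^2 * (c*d) \<le> (a^2*d + b^2*c)*(c+d)"
  proof -
    have "(a^2*d + b^2*c)*(c+d) - (a+b)^2 * (c*d) = (a*d - b*c)^2"
      by (simp add: power2_eq_square algebra_simps)
    then show ?thesis by (smt (verit) zero_le_power2)
  qed
  then have "(a+b)^2 / (c+d) \<le> a^2/c + b^2/d"
    using c d by (simp add: field_simps)
  then show ?thesis using c d by (simp add: P_def)
qed

lemma P_scale: "0 \<le> s \<Longrightarrow> P (s * u) (s * w) = s * P u w"
  by (auto simp: P_def power2_eq_square)

lemma P_convex:
  assumes "0 \<le> w1" "0 \<le> w2" "w1 = 0 \<Longrightarrow> u1 = 0" "w2 = 0 \<Longrightarrow> u2 = 0" "0 \<le> t" "t \<le> 1"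
  shows "P (u1 + t*(u2-u1)) (w1 + t*(w2-w1)) \<le> P u1 w1 + t*(P u2 w2 - P u1 w1)"
proof -
  have e1: "u1 + t*(u2-u1) = (1-t)*u1 + t*u2" "w1 + t*(w2-w1) = (1-t)*w1 + t*w2"
    by (simp_all add: algebra_simps)
  have "P ((1-t)*u1 + t*u2) ((1-t)*w1 + t*w2) \<le> P ((1-t)*u1) ((1-t)*w1) + P (t*u2) (t*w2)"
    by (rule P_sub) (use assms in auto)
  also have "\<dots> = (1-t) * P u1 w1 + t * P u2 w2"
    using assms by (simp add: P_scale)
  finally show ?thesis unfolding e1 by (simp add: algebra_simps)
qed

definition Gf :: "nat \<Rightarrow> nat \<Rightarrow> (nat \<Rightarrow> nat \<Rightarrow> real) \<Rightarrow> (nat \<Rightarrow> real) \<Rightarrow> (nat \<Rightarrow> real) \<Rightarrow> real" where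
  "Gf m n A y x = (\<Sum>k<m. (resid m n A y x k)\<^sup>2)"

definition av :: "nat \<Rightarrow> nat \<Rightarrow> (nat \<Rightarrow> nat \<Rightarrow> real) \<Rightarrow> (nat \<Rightarrow> real) \<Rightarrow> (nat \<Rightarrow> real) \<Rightarrow> nat \<Rightarrow> real" where
  "av m n A y x j = (\<Sum>k<m. A k j * resid m n A y x k)"

lemma resid_shift: "resid m n A y (\<lambda>j. x j + t * d j) k = resid m n A y x k - t * (\<Sum>j<n. A k j * d j)"
  by (simp add: resid_def algebra_simps sum.distrib sum_distrib_left)

lemma G_expand:
  "Gf m n A y (\<lambda>j. x j + t * d j) = Gf m n A y x - 2*t*(\<Sum>j<n. av m n A y x j * d j)
     + t^2 * (\<Sum>k<m. (\<Sum>j<n. A k j * d j)^2)"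
proof -
  have cross: "(\<Sum>k<m. resid m n A y x k * (\<Sum>j<n. A k j * d j)) = (\<Sum>j<n. av m n A y x j * d j)"
    unfolding av_def sum_distrib_left sum_distrib_right
    by (subst sum.swap) (simp add: mult_ac)
  show ?thesis
    unfolding Gf_def resid_shift power2_diff
    by (simp add: sum.distrib sum_subtractf sum_distrib_left[symmetric] cross[symmetric]
        power_mult_distrib algebra_simps) (use cross in \<open>simp add: mult_ac\<close>)
qed

definition Hf :: "nat \<Rightarrow> real \<Rightarrow> real \<Rightarrow> (nat \<Rightarrow> real) \<Rightarrow> (nat \<Rightarrow> real) \<Rightarrow> real" where
  "Hf n \<gamma> \<mu> x z = (\<Sum>j<n. P (x j) (z j) / \<gamma> + \<mu> * z j)"

definition fin :: "nat \<Rightarrow> (nat \<Rightarrow> real) \<Rightarrow> (nat \<Rightarrow> real) \<Rightarrow> bool" where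
  "fin n x z \<longleftrightarrow> (\<forall>j<n. z j = 0 \<longrightarrow> x j = 0)"

definition phi :: "real \<Rightarrow> real \<Rightarrow> real \<Rightarrow> real \<Rightarrow> real \<Rightarrow> real" where
  "phi a \<gamma> \<mu> u w = -2*a*u + P u w / \<gamma> + \<mu> * w"

lemma obj_fin:
  assumes "cr_feas n x z" "fin n x z"
  shows "obj m n A y \<gamma> \<mu> x z = ereal (Gf m n A y x + Hf n \<gamma> \<mu> x z)"
proof -
  have "(\<Sum>j<n. persp (x j) (z j)) = (\<Sum>j<n. ereal (P (x j) (z j)))"
    using assms by (intro sum.cong) (auto simp: persp_def P_def fin_def)
  also have "\<dots> = ereal (\<Sum>j<n. P (x j) (z j))" by simp
  finally have s: "(\<Sum>j<n. persp (x j) (z j)) = ereal (\<Sum>j<n. P (x j) (z j))" .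
  have h: "Hf n \<gamma> \<mu> x z = 1/\<gamma> * (\<Sum>j<n. P (x j) (z j)) + \<mu> * (\<Sum>j<n. z j)"
    by (simp add: Hf_def sum.distrib sum_distrib_left sum_divide_distrib)
  show ?thesis unfolding obj_def s h Gf_def by simp
qed

lemma obj_inf:
  assumes "\<not> fin n x z" "\<gamma> > 0"
  shows "obj m n A y \<gamma> \<mu> x z = \<infinity>"
proof -
  obtain j where j: "j < n" "z j = 0" "x j \<noteq> 0" using assms unfolding fin_def by auto
  have "(\<Sum>j<n. persp (x j) (z j)) = \<infinity>"
    unfolding sum_Pinfty using j by (auto simp: persp_def)
  then show ?thesis unfolding obj_def using assms by simp
qed

lemma Ldiff:
  "(\<Sum>j<n. phi (a j) \<gamma> \<mu> (u j) (w j)) - (\<Sum>j<n. phi (a j) \<gamma> \<mu> (x j) (z j))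
   = -2 * (\<Sum>j<n. a j * (u j - x j)) + Hf n \<gamma> \<mu> u w - Hf n \<gamma> \<mu> x z"
proof -
  have L: "(\<Sum>j<n. phi (a j) \<gamma> \<mu> (u j) (w j)) = -2 * (\<Sum>j<n. a j * u j) + Hf n \<gamma> \<mu> u w"
    for u w :: "nat \<Rightarrow> real"
    unfolding phi_def Hf_def by (simp add: sum.distrib sum_distrib_left add.assoc mult.assoc sum_subtractf sum_negf)
  show ?thesis unfolding L by (simp add: right_diff_distrib sum_subtractf)
qed

lemma lin:
  assumes g: "\<gamma> > 0" and feas: "cr_feas n xs zs" "fin n xs zs"
    and opt: "\<And>u w. cr_feas n u w \<Longrightarrow> fin n u w \<Longrightarrow>
        Gf m n A y xs + Hf n \<gamma> \<mu> xs zs \<le> Gf m n A y u + Hf n \<gamma> \<mu> u w"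
    and uw: "cr_feas n u w" "fin n u w"
  shows "(\<Sum>j<n. phi (av m n A y xs j) \<gamma> \<mu> (xs j) (zs j))
         \<le> (\<Sum>j<n. phi (av m n A y xs j) \<gamma> \<mu> (u j) (w j))"
proof -
  define a where "a = av m n A y xs"
  define c where "c = (\<Sum>j<n. phi (a j) \<gamma> \<mu> (u j) (w j)) - (\<Sum>j<n. phi (a j) \<gamma> \<mu> (xs j) (zs j))"
  define Q where "Q = (\<Sum>k<m. (\<Sum>j<n. A k j * (u j - xs j))^2)"
  have Q0: "Q \<ge> 0" unfolding Q_def by (intro sum_nonneg) auto
  have key: "0 \<le> t * c + t^2 * Q" if t: "0 < t" "t \<le> 1" for t
  proof -
    define px where "px = (\<lambda>j. xs j + t * (u j - xs j))"
    define pz where "pz = (\<lambda>j. zs j + t * (w j - zs j))"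
    have zb: "0 \<le> zs j" "zs j \<le> 1" "0 \<le> w j" "w j \<le> 1" if "j < n" for j
      using feas uw that by (auto simp: cr_feas_def)
    have pf: "cr_feas n px pz"
      unfolding cr_feas_def pz_def
    proof (intro allI impI conjI)
      fix j assume j: "j < n"
      have e: "zs j + t * (w j - zs j) = (1-t) * zs j + t * w j" by (simp add: algebra_simps)
      show "0 \<le> zs j + t * (w j - zs j)" unfolding e using zb[OF j] t by simp
      have "(1-t) * zs j + t * w j \<le> (1-t) * 1 + t * 1"
        using zb[OF j] t by (intro add_mono mult_left_mono) auto
      then show "zs j + t * (w j - zs j) \<le> 1" unfolding e by simp
    qed
    have pfin: "fin n px pz"
      unfolding fin_def px_def pz_def
    proof (intro allI impI)
      fix j assume j: "j < n" and h0: "zs j + t * (w j - zs j) = 0"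
      have e: "zs j + t * (w j - zs j) = (1-t) * zs j + t * w j" by (simp add: algebra_simps)
      have a1: "(1-t) * zs j \<ge> 0" "t * w j \<ge> 0" using zb[OF j] t by auto
      then have "(1-t) * zs j = 0" "t * w j = 0" using h0 e by linarith+
      then have "w j = 0" and zz: "t = 1 \<or> zs j = 0" using t by auto
      then have "u j = 0" using uw j by (auto simp: fin_def)
      moreover have "t = 1 \<or> xs j = 0" using zz feas j by (auto simp: fin_def)
      ultimately show "xs j + t * (u j - xs j) = 0" by auto
    qed
    define S where "S = (\<Sum>j<n. a j * (u j - xs j))"
    have G: "Gf m n A y px = Gf m n A y xs - 2*t*S + t^2 * Q"
      unfolding px_def a_def Q_def S_def by (rule G_expand)
    have H: "Hf n \<gamma> \<mu> px pz \<le> Hf n \<gamma> \<mu> xs zs + t * (Hf n \<gamma> \<mu> u w - Hf n \<gamma> \<mu> xs zs)"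
    proof -
      have "Hf n \<gamma> \<mu> px pz \<le> (\<Sum>j<n. (P (xs j) (zs j) + t*(P (u j) (w j) - P (xs j) (zs j))) / \<gamma>
              + \<mu> * (zs j + t * (w j - zs j)))"
        unfolding Hf_def px_def pz_def
      proof (intro sum_mono add_mono divide_right_mono)
        fix j assume "j \<in> {..<n}"
        then have j: "j < n" by simp
        show "P (xs j + t * (u j - xs j)) (zs j + t * (w j - zs j))
           \<le> P (xs j) (zs j) + t * (P (u j) (w j) - P (xs j) (zs j))"
          by (rule P_convex) (use zb[OF j] feas uw j t in \<open>auto simp: fin_def\<close>)
      qed (use g in auto)
      also have "\<dots> = Hf n \<gamma> \<mu> xs zs + t * (Hf n \<gamma> \<mu> u w - Hf n \<gamma> \<mu> xs zs)"
        unfolding Hf_def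
        by (simp add: sum.distrib sum_subtractf sum_distrib_left algebra_simps add_divide_distrib diff_divide_distrib)
      finally show ?thesis .
    qed
    have c: "c = -2 * S + Hf n \<gamma> \<mu> u w - Hf n \<gamma> \<mu> xs zs"
      unfolding c_def S_def by (rule Ldiff)
    have tc: "t * c = -2 * t * S + t * (Hf n \<gamma> \<mu> u w - Hf n \<gamma> \<mu> xs zs)"
      unfolding c by (simp add: algebra_simps)
    have "Gf m n A y xs + Hf n \<gamma> \<mu> xs zs \<le> Gf m n A y px + Hf n \<gamma> \<mu> px pz"
      by (rule opt[OF pf pfin])
    then show ?thesis using G H tc by linarith
  qed
  have "c \<ge> 0"
  proof (rule ccontr)
    assume "\<not> c \<ge> 0"
    then have cn: "c < 0" by simp
    define t where "t = min 1 (-c / (2*(Q+1)))"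
    have "-c / (2*(Q+1)) > 0" using cn Q0 by (intro divide_pos_pos) auto
    then have t0: "t > 0" by (simp add: t_def)
    have t1: "t \<le> 1" by (simp add: t_def)
    have "t * (Q+1) \<le> -c/(2*(Q+1)) * (Q+1)"
      using Q0 by (intro mult_right_mono) (auto simp: t_def)
    also have "\<dots> = -c/2" using Q0 by (simp add: field_simps)
    finally have "t * Q \<le> -c/2" using t0 by (simp add: algebra_simps)
    then have "c + t * Q < 0" using cn by linarith
    then have "t * (c + t*Q) < 0" using t0 by (simp add: mult_pos_neg)
    then show False using key[OF t0 t1] by (simp add: power2_eq_square algebra_simps)
  qed
  then show ?thesis unfolding c_def a_def by simp
qed

lemma coord:
  assumes g: "\<gamma> > 0" and feas: "cr_feas n xs zs" "fin n xs zs"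
    and opt: "\<And>u w. cr_feas n u w \<Longrightarrow> fin n u w \<Longrightarrow>
        Gf m n A y xs + Hf n \<gamma> \<mu> xs zs \<le> Gf m n A y u + Hf n \<gamma> \<mu> u w"
    and j: "j < n" and w0: "0 \<le> w0" "w0 \<le> 1" "w0 = 0 \<Longrightarrow> u0 = 0"
  shows "phi (av m n A y xs j) \<gamma> \<mu> (xs j) (zs j) \<le> phi (av m n A y xs j) \<gamma> \<mu> u0 w0"
proof -
  define f where "f = (\<lambda>k. phi (av m n A y xs k) \<gamma> \<mu>)"
  have c1: "cr_feas n (xs(j:=u0)) (zs(j:=w0))" using feas w0 by (auto simp: cr_feas_def)
  have c2: "fin n (xs(j:=u0)) (zs(j:=w0))" using feas w0 by (auto simp: fin_def)
  define g1 where "g1 = (\<lambda>k. f k (xs k) (zs k))"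
  define g2 where "g2 = (\<lambda>k. f k ((xs(j:=u0)) k) ((zs(j:=w0)) k))"
  have "sum g1 {..<n} \<le> sum g2 {..<n}"
    unfolding f_def g1_def g2_def by (rule lin[OF g feas opt c1 c2])
  moreover have "sum g1 {..<n} = g1 j + sum g1 ({..<n}-{j})" by (rule sum.remove) (use j in auto)
  moreover have "sum g2 {..<n} = g2 j + sum g2 ({..<n}-{j})" by (rule sum.remove) (use j in auto)
  moreover have "sum g2 ({..<n}-{j}) = sum g1 ({..<n}-{j})"
    unfolding g1_def g2_def by (intro sum.cong) auto
  moreover have "g2 j = f j u0 w0" unfolding g2_def by simp
  ultimately have "g1 j \<le> f j u0 w0" by linarith
  then show ?thesis unfolding g1_def f_def by simp
qed

lemma main:
  assumes g: "\<gamma> > 0" and mu: "\<mu> \<ge> 0"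
    and cr: "cr_opt m n A y \<gamma> \<mu> xs zs"
    and zb: "ereal zbar \<ge> zeta_R m n A y \<gamma> \<mu>"
    and mo: "mipr_opt m n A y \<gamma> \<mu> x z"
    and i: "i < n"
  defines "\<delta> \<equiv> (\<Sum>j<m. A j i * resid m n A y xs j)\<^sup>2"
  shows "Gf m n A y xs + Hf n \<gamma> \<mu> xs zs + (\<mu> - \<gamma> * \<delta>) > zbar \<Longrightarrow> z i = 0"
    and "Gf m n A y xs + Hf n \<gamma> \<mu> xs zs + (- \<mu> + \<gamma> * \<delta>) > zbar \<Longrightarrow> z i = 1"
    and "obj m n A y \<gamma> \<mu> xs zs = ereal (Gf m n A y xs + Hf n \<gamma> \<mu> xs zs)"
proof -
  have crf: "cr_feas n xs zs" using cr by (simp add: cr_opt_def)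
  have z0: "cr_feas n (\<lambda>_. 0) (\<lambda>_. 0)" "fin n (\<lambda>_. 0) (\<lambda>_. 0)" by (auto simp: cr_feas_def fin_def)
  have finxs: "fin n xs zs"
  proof (rule ccontr)
    assume "\<not> fin n xs zs"
    then have "obj m n A y \<gamma> \<mu> xs zs = \<infinity>" using obj_inf g by blast
    moreover have "obj m n A y \<gamma> \<mu> xs zs \<le> obj m n A y \<gamma> \<mu> (\<lambda>_. 0) (\<lambda>_. 0)"
      using cr z0 by (simp add: cr_opt_def)
    ultimately show False using obj_fin[OF z0] by simp
  qed
  show objxs: "obj m n A y \<gamma> \<mu> xs zs = ereal (Gf m n A y xs + Hf n \<gamma> \<mu> xs zs)"
    by (rule obj_fin[OF crf finxs])
  have opt: "Gf m n A y xs + Hf n \<gamma> \<mu> xs zs \<le> Gf m n A y u + Hf n \<gamma> \<mu> u w"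
    if "cr_feas n u w" "fin n u w" for u w
  proof -
    have "obj m n A y \<gamma> \<mu> xs zs \<le> obj m n A y \<gamma> \<mu> u w" using cr that by (simp add: cr_opt_def)
    then show ?thesis using objxs obj_fin[OF that] by simp
  qed
  define a where "a = av m n A y xs"
  have da: "\<delta> = (a i)^2" unfolding \<delta>_def a_def av_def by simp
  have mf: "mipr_feas n x z" using mo by (simp add: mipr_opt_def)
  have xcr: "cr_feas n x z" "fin n x z" using mf by (auto simp: mipr_feas_def cr_feas_def fin_def)
  have zi: "z i = 0 \<or> z i = 1" using mf i by (simp add: mipr_feas_def)
  have xi0: "z i = 0 \<Longrightarrow> x i = 0" using mf i by (auto simp: mipr_feas_def)
  have objx: "obj m n A y \<gamma> \<mu> x z = ereal (Gf m n A y x + Hf n \<gamma> \<mu> x z)"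
    by (rule obj_fin[OF xcr])
  have "obj m n A y \<gamma> \<mu> x z \<le> zeta_R m n A y \<gamma> \<mu>"
    unfolding zeta_R_def using mo by (intro INF_greatest) (auto simp: mipr_opt_def)
  then have Fx: "Gf m n A y x + Hf n \<gamma> \<mu> x z \<le> zbar" using zb objx
    by (metis ereal_less_eq(3) order.trans)
  define Q where "Q = (\<Sum>k<m. (\<Sum>j<n. A k j * (x j - xs j))^2)"
  have Q0: "Q \<ge> 0" unfolding Q_def by (intro sum_nonneg) auto
  have "Gf m n A y (\<lambda>j. xs j + 1 * (x j - xs j)) = Gf m n A y xs - 2*1*(\<Sum>j<n. a j * (x j - xs j)) + 1^2 * Q"
    unfolding a_def Q_def by (rule G_expand)
  then have Gx: "Gf m n A y x = Gf m n A y xs - 2*(\<Sum>j<n. a j * (x j - xs j)) + Q" by simp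
  have Ld: "(\<Sum>j<n. phi (a j) \<gamma> \<mu> (x j) (z j)) - (\<Sum>j<n. phi (a j) \<gamma> \<mu> (xs j) (zs j))
     = -2 * (\<Sum>j<n. a j * (x j - xs j)) + Hf n \<gamma> \<mu> x z - Hf n \<gamma> \<mu> xs zs" by (rule Ldiff)
  have co: "phi (a j) \<gamma> \<mu> (xs j) (zs j) \<le> phi (a j) \<gamma> \<mu> u0 w0"
    if "j < n" "0 \<le> w0" "w0 \<le> 1" "w0 = 0 \<Longrightarrow> u0 = 0" for j u0 w0
    unfolding a_def by (rule coord[OF g crf finxs opt that]) auto
  have "(\<Sum>j<n. phi (a j) \<gamma> \<mu> (x j) (z j)) - (\<Sum>j<n. phi (a j) \<gamma> \<mu> (xs j) (zs j))
     = (\<Sum>j<n. phi (a j) \<gamma> \<mu> (x j) (z j) - phi (a j) \<gamma> \<mu> (xs j) (zs j))"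
    by (simp add: sum_subtractf)
  also have "\<dots> = (phi (a i) \<gamma> \<mu> (x i) (z i) - phi (a i) \<gamma> \<mu> (xs i) (zs i)) +
      (\<Sum>j\<in>{..<n}-{i}. phi (a j) \<gamma> \<mu> (x j) (z j) - phi (a j) \<gamma> \<mu> (xs j) (zs j))"
    using i by (subst sum.remove[of _ i]) auto
  also have "\<dots> \<ge> phi (a i) \<gamma> \<mu> (x i) (z i) - phi (a i) \<gamma> \<mu> (xs i) (zs i)"
  proof -
    have "(\<Sum>j\<in>{..<n}-{i}. phi (a j) \<gamma> \<mu> (x j) (z j) - phi (a j) \<gamma> \<mu> (xs j) (zs j)) \<ge> 0"
    proof (intro sum_nonneg)
      fix j assume "j \<in> {..<n}-{i}"
      then have j: "j < n" by simp
      have "phi (a j) \<gamma> \<mu> (xs j) (zs j) \<le> phi (a j) \<gamma> \<mu> (x j) (z j)"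
        using co[OF j] xcr j by (auto simp: cr_feas_def fin_def)
      then show "phi (a j) \<gamma> \<mu> (x j) (z j) - phi (a j) \<gamma> \<mu> (xs j) (zs j) \<ge> 0" by simp
    qed
    then show ?thesis by simp
  qed
  finally have bound: "Gf m n A y x + Hf n \<gamma> \<mu> x z \<ge> Gf m n A y xs + Hf n \<gamma> \<mu> xs zs
      + phi (a i) \<gamma> \<mu> (x i) (z i) - phi (a i) \<gamma> \<mu> (xs i) (zs i)"
    using Gx Ld Q0 by linarith
  have p0: "phi (a i) \<gamma> \<mu> (xs i) (zs i) \<le> 0"
    using co[OF i, of 0 0] by (simp add: phi_def P_def)
  have p1: "phi (a i) \<gamma> \<mu> (xs i) (zs i) \<le> \<mu> - \<gamma> * \<delta>"
  proof -
    have "phi (a i) \<gamma> \<mu> (a i * \<gamma>) 1 = \<mu> - \<gamma> * \<delta>"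
      using g unfolding da by (simp add: phi_def P_def power2_eq_square field_simps)
    then show ?thesis using co[OF i, of 1 "a i * \<gamma>"] by simp
  qed
  show "Gf m n A y xs + Hf n \<gamma> \<mu> xs zs + (\<mu> - \<gamma> * \<delta>) > zbar \<Longrightarrow> z i = 0"
  proof (rule ccontr)
    assume h: "Gf m n A y xs + Hf n \<gamma> \<mu> xs zs + (\<mu> - \<gamma> * \<delta>) > zbar" and "z i \<noteq> 0"
    then have z1: "z i = 1" using zi by simp
    have "phi (a i) \<gamma> \<mu> (x i) (z i) \<ge> \<mu> - \<gamma> * \<delta>"
    proof -
      have "(x i - \<gamma> * a i)^2 / \<gamma> \<ge> 0" using g by simp
      moreover have "(x i - \<gamma> * a i)^2 / \<gamma> = phi (a i) \<gamma> \<mu> (x i) (z i) - (\<mu> - \<gamma> * \<delta>)"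
        using g unfolding da z1 by (simp add: phi_def P_def power2_eq_square field_simps)
      ultimately show ?thesis by simp
    qed
    then show False using bound p0 Fx h by linarith
  qed
  show "Gf m n A y xs + Hf n \<gamma> \<mu> xs zs + (- \<mu> + \<gamma> * \<delta>) > zbar \<Longrightarrow> z i = 1"
  proof (rule ccontr)
    assume h: "Gf m n A y xs + Hf n \<gamma> \<mu> xs zs + (- \<mu> + \<gamma> * \<delta>) > zbar" and "z i \<noteq> 1"
    then have z1: "z i = 0" using zi by simp
    then have "phi (a i) \<gamma> \<mu> (x i) (z i) = 0" using xi0 by (simp add: phi_def P_def)
    then show False using bound p1 Fx h by linarith
  qed
qed

theorem proposition1:
  fixes m n :: nat and A :: "nat \<Rightarrow> nat \<Rightarrow> real" and y :: "nat \<Rightarrow> real"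
    and \<gamma> \<mu> :: real and xs zs :: "nat \<Rightarrow> real" and zbar :: real
    and x z :: "nat \<Rightarrow> real" and i :: nat
  assumes "\<gamma> > 0" and "\<mu> \<ge> 0"
    and "cr_opt m n A y \<gamma> \<mu> xs zs"
    and "ereal zbar \<ge> zeta_R m n A y \<gamma> \<mu>"
    and "mipr_opt m n A y \<gamma> \<mu> x z"
    and "i < n"
  defines "\<delta> \<equiv> (\<Sum>j<m. A j i * resid m n A y xs j)\<^sup>2"
  defines "\<zeta>CR \<equiv> obj m n A y \<gamma> \<mu> xs zs"
  shows "(\<zeta>CR + ereal (\<mu> - \<gamma> * \<delta>) > ereal zbar \<longrightarrow> z i = 0)
       \<and> (\<zeta>CR + ereal (- \<mu> + \<gamma> * \<delta>) > ereal zbar \<longrightarrow> z i = 1)"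
  using main[OF assms(1-6)] unfolding \<zeta>CR_def \<delta>_def by auto

end
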